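(* Let $\gamma>0$, $\beta\ge0$, $t_0\in\mathbb{R}$, and let $w_n$ ($n\ge0$) be defined on $[0,\infty)\times\mathbb{R}$ by \[ w_0(x_3,t)=\frac{\theta(t-t_0)}{4(\pi\gamma)^{3/2}\sqrt{t-t_0}}e^{-\frac{x_3^2}{4\gamma(t-t_0)}},\qquad w_n(x_3,t)=\frac{-\beta}{\sqrt{\pi\gamma}}\int_{t_0}^t\frac{w_{n-1}(0,s)}{\sqrt{t-s}}e^{-\frac{x_3^2}{4\gamma(t-s)}}\,ds\ (n\ge1,\ t>t_0), \] and $w_n=0$ for $t\le t_0$. Then for every $n\ge1$, $x_3\ge0$, $t>t_0$, with $\zeta=x_3/\sqrt{4\gamma(t-t_0)}$, \[ w_n(x_3,t)=\frac{(-\beta)^n(t-t_0)^{(n-1)/2}}{4(\pi\gamma)^{(n+3)/2}}\cdot\frac{2^{\lfloor\frac{n-1}{2}\rfloor}\pi^{\lfloor\frac n2\rfloor}}{(n-2)!!}\Big[B\big(\tfrac n2,\tfrac12\big)\,{}_1F_1\big(\tfrac{1-n}{2},\tfrac12;-\zeta^2\big)-2\sqrt\pi\,\zeta\,{}_1F_1\big(1-\tfrac n2,\tfrac32;-\zeta^2\big)\Big], \] and in particular \[ w_n(0,t)=\frac{(-\beta)^n(t-t_0)^{(n-1)/2}}{4(\pi\gamma)^{(n+3)/2}}\cdot\frac{2^{\lfloor\frac n2\rfloor}\pi^{\lfloor\frac{n+1}{2}\rfloor}}{(n-1)!!}. \]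
   Context: $\theta$ is the Heaviside function. $\lfloor x\rfloor$ is the largest integer $\le x$. Double factorials: $m!!=m(m-2)(m-4)\cdots$ with $(-1)!!=0!!=1$. $B(p,q)=\int_0^1 s^{p-1}(1-s)^{q-1}ds$ is the beta function and ${}_1F_1(a,c;z)=\sum_{k\ge0}\frac{(a)_k}{(c)_kk!}z^k$ is Kummer's confluent hypergeometric function, $(a)_k$ the Pochhammer symbol. *)

theory Defs
  imports "HOL-Analysis.Analysis"
begin

function dfact :: "int \<Rightarrow> nat" where
  "dfact m = (if m \<le> 0 then 1 else nat m * dfact (m - 2))"
  by auto
termination by (relation "Wellfounded.measure nat") auto

definition hyp1F1 :: "real \<Rightarrow> real \<Rightarrow> real \<Rightarrow> real" where
  "hyp1F1 a c z = (\<Sum>k. pochhammer a k / (pochhammer c k * fact k) * z ^ k)"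

fun w :: "real \<Rightarrow> real \<Rightarrow> real \<Rightarrow> nat \<Rightarrow> real \<Rightarrow> real \<Rightarrow> real" where
  "w gam bet t0 0 x3 t =
     (if t > t0 then exp (- (x3^2) / (4 * gam * (t - t0))) /
        (4 * (pi * gam) powr (3/2) * sqrt (t - t0)) else 0)"
| "w gam bet t0 (Suc n) x3 t =
     (if t > t0 then (- bet) / sqrt (pi * gam) *
        (LINT s:{t0<..<t}|lborel. w gam bet t0 n 0 s / sqrt (t - s) *
            exp (- (x3^2) / (4 * gam * (t - s))))
      else 0)"

end

theory Submission
  imports Defs
begin


lemma gamma_half_int: "((\<lambda>w::real. w powr (-1/2) / exp w) has_integral sqrt pi) {0<..}"
proof -
  have "((\<lambda>w::real. w powr (1/2 - 1) / exp w) has_integral Gamma (1/2)) {0..}"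
    by (rule Gamma_integral_real) simp
  hence "((\<lambda>w::real. w powr (-1/2) / exp w) has_integral sqrt pi) {0..}"
    by (simp add: Gamma_one_half_real)
  then show ?thesis
    by (rule has_integral_spike_set_eq[THEN iffD1, rotated 2]) (auto intro!: negligible_subset[OF negligible_empty])
qed

lemma J_int:
  fixes c s :: real
  assumes c: "c > 0" and s: "s < 1"
  shows "((\<lambda>u. (u-s) powr (-1/2) * (1-u) powr (-3/2) * exp (-c/(1-u))) has_integral
           (sqrt pi / sqrt c * (1-s) powr (-1/2) * exp (-c/(1-s)))) {s<..<1}"
proof -
  define \<tau> where "\<tau> = 1 - s"
  have tau: "\<tau> > 0" using s by (simp add: \<tau>_def)
  define K where "K = c powr (-1/2) * \<tau> powr (-1/2) * exp (-c/\<tau>)"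
  define g where "g = (\<lambda>w::real. 1 - 1/(w/c + 1/\<tau>))"
  define g' where "g' = (\<lambda>w::real. (1/c) / (w/c + 1/\<tau>)^2)"
  define f where "f = (\<lambda>u::real. (u-s) powr (-1/2) * (1-u) powr (-3/2) * exp (-c/(1-u)))"
  define h where "h = (\<lambda>w::real. K * (w powr (-1/2) / exp w))"
  have hint: "(h has_integral K * sqrt pi) {0<..}"
    unfolding h_def by (intro has_integral_mult_right gamma_half_int)
  have eq: "\<bar>g' w\<bar> * f (g w) = h w" if "w > 0" for w
  proof -
    define p where "p = w/c + 1/\<tau>"
    have p: "p > 0" using that c tau unfolding p_def by (intro add_pos_pos divide_pos_pos) auto
    have "g w - s = \<tau> - 1/p" by (simp add: g_def p_def \<tau>_def)
    also have "\<dots> = (\<tau> * p - 1) / p" using p by (simp add: field_simps)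
    also have "\<tau> * p - 1 = \<tau> * (w/c)" using tau by (simp add: p_def field_simps)
    finally have gw: "g w - s = \<tau> * (w/c) / p" .
    have gw2: "1 - g w = 1/p" by (simp add: g_def p_def)
    have "-c / (1 - g w) = (-w) + (-c/\<tau>)" using c by (simp add: gw2 p_def field_simps)
    then have ex: "exp (-c / (1 - g w)) = exp (-w) * exp (-c/\<tau>)"
      by (metis exp_add)
    have fg: "f (g w) = ((\<tau> * (w/c) / p) powr (-1/2) * (1/p) powr (-3/2)) * (exp (-w) * exp (-c/\<tau>))"
      unfolding f_def by (subst ex, subst gw, subst gw2) (simp add: mult.assoc)
    have "\<bar>g' w\<bar> * f (g w) = (1/c) / p^2 * ((\<tau> * (w/c) / p) powr (-1/2) * (1/p) powr (-3/2)) * (exp (-w) * exp (-c/\<tau>))"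
      using c p unfolding fg by (simp add: g'_def p_def[symmetric] abs_of_pos)
    also have "(\<tau> * (w/c) / p) powr (-1/2) * (1/p) powr (-3/2) = \<tau> powr (-1/2) * w powr (-1/2) * c powr (1/2) * p^2"
    proof -
      have "(\<tau> * (w/c) / p) powr (-1/2) = \<tau> powr (-1/2) * w powr (-1/2) * c powr (1/2) * p powr (1/2)"
        using tau that c p by (simp add: powr_divide powr_mult powr_minus_divide divide_simps) 
      moreover have "(1/p) powr (-3/2) = p powr (3/2)" using p by (simp add: powr_divide powr_minus_divide)
      moreover have "p powr (1/2) * p powr (3/2) = p^2" using p by (simp flip: powr_add)
      ultimately show ?thesis by (simp add: algebra_simps)
    qed
    finally have *: "\<bar>g' w\<bar> * f (g w) = (1/c) / p^2 * (\<tau> powr (-1/2) * w powr (-1/2) * c powr (1/2) * p^2) * (exp (-w) * exp (-c/\<tau>))" .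
    have cc: "c powr (1/2) * c powr (1/2) = c" using c by (simp flip: powr_add)
    show ?thesis
      using c p cc tau that unfolding * h_def K_def
      by (simp add: field_simps exp_minus powr_minus_divide)
  qed
  have S: "{0::real<..} \<in> sets lebesgue" by (intro sets_completionI_sets) (simp add: borel_open)
  have der: "(g has_field_derivative g' w) (at w within {0<..})" if "w \<in> {0<..}" for w
  proof -
    have "w/c + 1/\<tau> > 0" using that c tau by (intro add_pos_pos divide_pos_pos) auto
    then show ?thesis unfolding g_def g'_def
      by (auto intro!: derivative_eq_intros simp: field_simps power2_eq_square)
  qed
  have inj: "inj_on g {0<..}"
  proof (rule inj_onI)
    fix x y assume "x \<in> {0<..}" "y \<in> {0<..}" "g x = g y"
    then have "1/(x/c + 1/\<tau>) = 1/(y/c + 1/\<tau>)" by (simp add: g_def)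
    then have "x/c + 1/\<tau> = y/c + 1/\<tau>" by simp
    then show "x = y" using c by simp
  qed
  have img: "g ` {0<..} = {s<..<1}"
  proof
    show "g ` {0<..} \<subseteq> {s<..<1}"
    proof
      fix u assume "u \<in> g ` {0<..}"
      then obtain w where w: "w > 0" "u = g w" by auto
      have p: "w/c + 1/\<tau> > 0" using w c tau by (intro add_pos_pos divide_pos_pos) auto
      have "1/(w/c + 1/\<tau>) < \<tau>" using p tau c w by (simp add: field_simps)
      moreover have "1/(w/c + 1/\<tau>) > 0" using p by simp
      ultimately show "u \<in> {s<..<1}" using w by (auto simp: g_def \<tau>_def)
    qed
  next
    show "{s<..<1} \<subseteq> g ` {0<..}"
    proof
      fix u assume u: "u \<in> {s<..<1}"
      define w where "w = c * (1/(1-u) - 1/\<tau>)"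
      have "1/(1-u) > 1/\<tau>" using u tau by (auto simp: \<tau>_def intro!: divide_strict_left_mono)
      then have "w > 0" using c by (simp add: w_def)
      moreover have "g w = u" using c u by (simp add: g_def w_def)
      ultimately show "u \<in> g ` {0<..}" by force
    qed
  qed
  have habs: "h absolutely_integrable_on {0<..}"
    using hint unfolding h_def K_def
    by (subst absolutely_integrable_on_iff_nonneg) (auto simp: has_integral_integrable)
  have "(\<lambda>w. \<bar>g' w\<bar> * f (g w)) absolutely_integrable_on {0<..} \<and>
        integral {0<..} (\<lambda>w. \<bar>g' w\<bar> * f (g w)) = K * sqrt pi"
  proof
    show "(\<lambda>w. \<bar>g' w\<bar> * f (g w)) absolutely_integrable_on {0<..}"
      by (rule absolutely_integrable_spike[OF habs, of "{}"]) (auto simp: eq)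
    have "integral {0<..} (\<lambda>w. \<bar>g' w\<bar> * f (g w)) = integral {0<..} h"
      by (rule integral_cong) (auto simp: eq)
    then show "integral {0<..} (\<lambda>w. \<bar>g' w\<bar> * f (g w)) = K * sqrt pi"
      using hint by (simp add: integral_unique)
  qed
  then have "f absolutely_integrable_on (g ` {0<..}) \<and> integral (g ` {0<..}) f = K * sqrt pi"
    using has_absolute_integral_change_of_variables_1'[OF S der inj] by blast
  then have "(f has_integral K * sqrt pi) {s<..<1}"
    unfolding img by (metis absolutely_integrable_on_def has_integral_integral)
  moreover have "K * sqrt pi = sqrt pi / sqrt c * (1-s) powr (-1/2) * exp (-c/(1-s))"
    using c by (simp add: K_def \<tau>_def powr_minus_divide powr_half_sqrt)
  ultimately show ?thesis by (simp add: f_def)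
qed


lemma ftc_nn:
  fixes F f :: "real \<Rightarrow> real"
  assumes ab: "a \<le> b" and der: "\<And>x. x \<in> {a..b} \<Longrightarrow> (F has_real_derivative f x) (at x)"
    and nn: "\<And>x. x \<in> {a..b} \<Longrightarrow> f x \<ge> 0"
  shows "(\<integral>\<^sup>+x. ennreal (f x) * indicator {a..b} x \<partial>lborel) = ennreal (F b - F a)"
proof -
  have "(f has_integral (F b - F a)) {a..b}"
    using ab by (rule fundamental_theorem_of_calculus)
      (auto intro!: has_field_derivative_at_within der simp: has_real_derivative_iff_has_vector_derivative[symmetric])
  then show ?thesis by (rule nn_integral_has_integral_lebesgue'[rotated]) (use nn in auto)
qed

lemma JN:
  fixes c s :: real assumes c: "c > 0" and s: "s < 1"
  shows "(\<integral>\<^sup>+u. ennreal ((u-s) powr (-1/2) * (1-u) powr (-3/2) * exp (-c/(1-u))) * indicator {s<..<1} u \<partial>lborel)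
       = ennreal (sqrt pi / sqrt c * (1-s) powr (-1/2) * exp (-c/(1-s)))"
  by (rule nn_integral_has_integral_lebesgue'[OF _ J_int[OF c s]]) auto

lemma BetaN01:
  fixes p q :: real assumes p: "p > 0" and q: "q > 0"
  shows "(\<integral>\<^sup>+x. ennreal (x powr (p-1) * (1-x) powr (q-1)) * indicator {0<..<1} x \<partial>lborel) = ennreal (Beta p q)"
proof -
  have "((\<lambda>t. t powr (p - 1) * (1 - t) powr (q - 1)) has_integral Beta p q) {0..1}"
    by (rule has_integral_Beta_real[OF p q])
  then have "((\<lambda>t. t powr (p - 1) * (1 - t) powr (q - 1)) has_integral Beta p q) {0<..<1}"
    using has_integral_open_interval[of "\<lambda>t. t powr (p - 1) * (1 - t) powr (q - 1)" "Beta p q" "0::real" 1]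
    by (simp add: box_real)
  then show ?thesis by (rule nn_integral_has_integral_lebesgue'[rotated]) auto
qed

lemma BetaN:
  fixes p q u :: real assumes p: "p > 0" and q: "q > 0" and u: "u > 0"
  shows "(\<integral>\<^sup>+s. ennreal (s powr (p-1) * (u-s) powr (q-1)) * indicator {0<..<u} s \<partial>lborel)
       = ennreal (u powr (p+q-1) * Beta p q)"
proof -
  have "(\<integral>\<^sup>+s. ennreal (s powr (p-1) * (u-s) powr (q-1)) * indicator {0<..<u} s \<partial>lborel)
      = ennreal \<bar>u\<bar> * (\<integral>\<^sup>+x. ennreal ((0 + u*x) powr (p-1) * (u-(0 + u*x)) powr (q-1)) * indicator {0<..<u} (0 + u*x) \<partial>lborel)"
    using u by (intro nn_integral_real_affine) auto
  also have "\<dots> = ennreal u * (\<integral>\<^sup>+x. ennreal (u powr (p-1) * u powr (q-1)) * (ennreal (x powr (p-1) * (1-x) powr (q-1)) * indicator {0<..<1} x) \<partial>lborel)"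
  proof -
    have "ennreal ((0 + u*x) powr (p-1) * (u-(0 + u*x)) powr (q-1)) * indicator {0<..<u} (0 + u*x)
        = ennreal (u powr (p-1) * u powr (q-1)) * (ennreal (x powr (p-1) * (1-x) powr (q-1)) * indicator {0<..<1} x)" for x
    proof (cases "x \<in> {0<..<1}")
      case True
      then have "0 < u*x" "u*x < u" using u by auto
      moreover have "u - u*x = u * (1-x)" by (simp add: algebra_simps)
      ultimately show ?thesis using True u
        by (simp add: powr_mult ennreal_mult'[symmetric] mult_ac)
    next
      case False
      then have "u*x \<notin> {0<..<u}" using u
        by (auto simp: zero_less_mult_iff mult_less_cancel_left1)
      then show ?thesis using False by simp
    qed
    then show ?thesis using u by simp
  qed
  also have "\<dots> = ennreal u * (ennreal (u powr (p-1) * u powr (q-1)) * ennreal (Beta p q))"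
    by (subst nn_integral_cmult) (auto simp: BetaN01[OF p q])
  also have "\<dots> = ennreal (u powr (p+q-1) * Beta p q)"
  proof -
    have "u * (u powr (p-1) * u powr (q-1)) = u powr (p+q-1)"
      using u by (simp add: powr_add[symmetric] powr_mult_base)
    moreover have "Beta p q \<ge> 0" using p q by (simp add: Beta_def)
    ultimately show ?thesis using u
      by (simp add: ennreal_mult'[symmetric] mult.assoc[symmetric])
  qed
  finally show ?thesis .
qed


definition FN :: "real \<Rightarrow> real \<Rightarrow> ennreal" where
  "FN b z = (\<integral>\<^sup>+u. ennreal (u powr (b-1) * (1-u) powr (-1/2) * exp (-(z^2)/(1-u))) * indicator {0<..<1} u \<partial>lborel)"

definition GN :: "real \<Rightarrow> real \<Rightarrow> ennreal" where
  "GN b z = (\<integral>\<^sup>+u. ennreal (u powr (b-1) * (1-u) powr (-3/2) * exp (-(z^2)/(1-u))) * indicator {0<..<1} u \<partial>lborel)"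

lemma FN0: assumes "b > 0" shows "FN b 0 = ennreal (Beta b (1/2))"
  using BetaN01[OF assms, of "1/2"] by (simp add: FN_def)

lemma Step1:
  fixes b z :: real assumes b: "b > 0" and z: "z \<ge> 0"
  shows "FN b 0 = FN b z + (\<integral>\<^sup>+\<eta>. ennreal (2*\<eta>) * GN b \<eta> * indicator {0..z} \<eta> \<partial>lborel)"
proof -
  define k where "k = (\<lambda>u::real. u powr (b-1) * (1-u) powr (-1/2))"
  define e where "e = (\<lambda>u::real. exp (-(z^2)/(1-u)))"
  have FN0': "FN b 0 = (\<integral>\<^sup>+u. ennreal (k u) * indicator {0<..<1} u \<partial>lborel)"
    by (simp add: FN_def k_def)
  also have "\<dots> = (\<integral>\<^sup>+u. ennreal (k u * e u) * indicator {0<..<1} u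
                       + ennreal (k u * (1 - e u)) * indicator {0<..<1} u \<partial>lborel)"
  proof (rule nn_integral_cong)
    fix u :: real
    show "ennreal (k u) * indicator {0<..<1} u = ennreal (k u * e u) * indicator {0<..<1} u
                       + ennreal (k u * (1 - e u)) * indicator {0<..<1} u"
    proof (cases "u \<in> {0<..<1}")
      case True
      have "e u \<le> 1" using True z by (simp add: e_def)
      moreover have "k u \<ge> 0" "e u \<ge> 0" by (simp_all add: k_def e_def)
      ultimately have "ennreal (k u) = ennreal (k u * e u) + ennreal (k u * (1 - e u))"
        by (subst ennreal_plus[symmetric]) (auto simp: algebra_simps intro: mult_left_le_one_le)
      then show ?thesis using True by simp
    qed simp
  qed
  also have "\<dots> = FN b z + (\<integral>\<^sup>+u. ennreal (k u * (1 - e u)) * indicator {0<..<1} u \<partial>lborel)"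
    by (subst nn_integral_add) (auto simp: FN_def k_def e_def mult.assoc)
  also have "(\<integral>\<^sup>+u. ennreal (k u * (1 - e u)) * indicator {0<..<1} u \<partial>lborel)
      = (\<integral>\<^sup>+u. (\<integral>\<^sup>+\<eta>. ennreal (k u * (2*\<eta>/(1-u) * exp (-(\<eta>^2)/(1-u)))) * indicator {0<..<1} u * indicator {0..z} \<eta> \<partial>lborel) \<partial>lborel)"
  proof (rule nn_integral_cong)
    fix u :: real
    show "ennreal (k u * (1 - e u)) * indicator {0<..<1} u
        = (\<integral>\<^sup>+\<eta>. ennreal (k u * (2*\<eta>/(1-u) * exp (-(\<eta>^2)/(1-u)))) * indicator {0<..<1} u * indicator {0..z} \<eta> \<partial>lborel)"
    proof (cases "u \<in> {0<..<1}")
      case True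
      have ku: "k u \<ge> 0" by (simp add: k_def)
      have "(\<integral>\<^sup>+\<eta>. ennreal (2*\<eta>/(1-u) * exp (-(\<eta>^2)/(1-u))) * indicator {0..z} \<eta> \<partial>lborel)
          = ennreal ((- exp (-(z^2)/(1-u))) - (- exp (-(0^2)/(1-u))))"
      proof -
        have "1 + u*u - u*2 = (1-u)*(1-u)" by (simp add: algebra_simps)
        moreover have "(1-u)*(1-u) > 0" using True by simp
        ultimately have nz: "1 + u*u - u*2 \<noteq> 0" by (metis less_irrefl)
        show ?thesis using True z nz
          by (intro ftc_nn) (auto intro!: derivative_eq_intros simp: field_simps)
      qed
      then have I: "(\<integral>\<^sup>+\<eta>. ennreal (2*\<eta>/(1-u) * exp (-(\<eta>^2)/(1-u))) * indicator {0..z} \<eta> \<partial>lborel)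
          = ennreal (1 - e u)" by (simp add: e_def)
      have "(\<integral>\<^sup>+\<eta>. ennreal (k u * (2*\<eta>/(1-u) * exp (-(\<eta>^2)/(1-u)))) * indicator {0<..<1} u * indicator {0..z} \<eta> \<partial>lborel)
          = (\<integral>\<^sup>+\<eta>. ennreal (k u) * (ennreal (2*\<eta>/(1-u) * exp (-(\<eta>^2)/(1-u))) * indicator {0..z} \<eta>) \<partial>lborel)"
      proof (rule nn_integral_cong)
        fix \<eta> :: real
        show "ennreal (k u * (2*\<eta>/(1-u) * exp (-(\<eta>^2)/(1-u)))) * indicator {0<..<1} u * indicator {0..z} \<eta>
            = ennreal (k u) * (ennreal (2*\<eta>/(1-u) * exp (-(\<eta>^2)/(1-u))) * indicator {0..z} \<eta>)"
        proof (cases "\<eta> \<in> {0..z}")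
          case True2: True
          have X: "2*\<eta>/(1-u) * exp (-(\<eta>^2)/(1-u)) \<ge> 0" using True True2 by auto
          have "ennreal (k u * (2*\<eta>/(1-u) * exp (-(\<eta>^2)/(1-u)))) = ennreal (k u) * ennreal (2*\<eta>/(1-u) * exp (-(\<eta>^2)/(1-u)))"
            using ku X by (rule ennreal_mult)
          then show ?thesis using True True2 by simp
        qed simp
      qed
      also have "\<dots> = ennreal (k u) * ennreal (1 - e u)"
        unfolding I[symmetric] by (rule nn_integral_cmult) simp
      finally show ?thesis using True ku by (simp add: ennreal_mult'[symmetric])
    qed simp
  qed
  also have "\<dots> = (\<integral>\<^sup>+\<eta>. (\<integral>\<^sup>+u. ennreal (k u * (2*\<eta>/(1-u) * exp (-(\<eta>^2)/(1-u)))) * indicator {0<..<1} u * indicator {0..z} \<eta> \<partial>lborel) \<partial>lborel)"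
    by (rule lborel_pair.Fubini'[symmetric]) (simp add: k_def case_prod_unfold)
  also have "\<dots> = (\<integral>\<^sup>+\<eta>. ennreal (2*\<eta>) * GN b \<eta> * indicator {0..z} \<eta> \<partial>lborel)"
  proof (rule nn_integral_cong)
    fix \<eta> :: real
    show "(\<integral>\<^sup>+u. ennreal (k u * (2*\<eta>/(1-u) * exp (-(\<eta>^2)/(1-u)))) * indicator {0<..<1} u * indicator {0..z} \<eta> \<partial>lborel)
        = ennreal (2*\<eta>) * GN b \<eta> * indicator {0..z} \<eta>"
    proof (cases "\<eta> \<in> {0..z}")
      case True
      have "(\<integral>\<^sup>+u. ennreal (k u * (2*\<eta>/(1-u) * exp (-(\<eta>^2)/(1-u)))) * indicator {0<..<1} u * indicator {0..z} \<eta> \<partial>lborel)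
          = (\<integral>\<^sup>+u. ennreal (2*\<eta>) * (ennreal (u powr (b-1) * (1-u) powr (-3/2) * exp (-(\<eta>^2)/(1-u))) * indicator {0<..<1} u) \<partial>lborel)"
      proof (rule nn_integral_cong)
        fix u :: real
        show "ennreal (k u * (2*\<eta>/(1-u) * exp (-(\<eta>^2)/(1-u)))) * indicator {0<..<1} u * indicator {0..z} \<eta>
            = ennreal (2*\<eta>) * (ennreal (u powr (b-1) * (1-u) powr (-3/2) * exp (-(\<eta>^2)/(1-u))) * indicator {0<..<1} u)"
        proof (cases "u \<in> {0<..<1}")
          case u: True
          have pw: "(1-u) powr (-3/2) = (1-u) powr (-1/2) / (1-u)"
            using u powr_diff[of "1-u" "-1/2" 1] by simp
          have "k u * (2*\<eta>/(1-u) * exp (-(\<eta>^2)/(1-u))) = (2*\<eta>) * (u powr (b-1) * (1-u) powr (-3/2) * exp (-(\<eta>^2)/(1-u)))"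
            unfolding pw k_def by (simp add: field_simps)
          then show ?thesis using u True by (simp add: ennreal_mult')
        qed simp
      qed
      also have "\<dots> = ennreal (2*\<eta>) * GN b \<eta>"
        by (subst nn_integral_cmult) (auto simp: GN_def)
      finally show ?thesis using True by simp
    qed simp
  qed
  finally show ?thesis .
qed


lemma Step2':
  fixes \<eta> :: real assumes eta: "\<eta> > 0"
  shows "ennreal (2*\<eta>) * GN (1/2) \<eta> = ennreal (2 * sqrt pi * exp (-(\<eta>^2)))"
proof -
  have "GN (1/2) \<eta> = ennreal (sqrt pi / sqrt (\<eta>^2) * (1-0) powr (-1/2) * exp (-(\<eta>^2)/(1-0)))"
    unfolding GN_def using JN[of "\<eta>^2" 0] eta by simp
  also have "\<dots> = ennreal (sqrt pi / \<eta> * exp (-(\<eta>^2)))" using eta by simp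
  finally show ?thesis using eta
    by (simp add: ennreal_mult'[symmetric])
qed

lemma Step2:
  fixes b \<eta> :: real assumes b: "b > 1/2" and eta: "\<eta> > 0"
  shows "ennreal (2*\<eta>) * GN b \<eta> = ennreal (2 * sqrt pi / Beta (b - 1/2) (1/2)) * FN (b - 1/2) \<eta>"
proof -
  define B where "B = Beta (b - 1/2) (1/2)"
  have Bpos: "B > 0" using b by (simp add: B_def Beta_def)
  define ex where "ex = (\<lambda>u::real. exp (-(\<eta>^2)/(1-u)))"
  define \<Phi> where "\<Phi> = (\<lambda>s u::real. ennreal (if 0 < s \<and> s < u \<and> u < 1 then
      1/B * s powr (b - 3/2) * (u-s) powr (-1/2) * (1-u) powr (-3/2) * exp (-(\<eta>^2)/(1-u)) else 0))"
  have GN1: "GN b \<eta> = (\<integral>\<^sup>+u. (\<integral>\<^sup>+s. \<Phi> s u \<partial>lborel) \<partial>lborel)"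
    unfolding GN_def
  proof (rule nn_integral_cong)
    fix u :: real
    show "ennreal (u powr (b-1) * (1-u) powr (-3/2) * exp (-(\<eta>^2)/(1-u))) * indicator {0<..<1} u
        = (\<integral>\<^sup>+s. \<Phi> s u \<partial>lborel)"
    proof (cases "u \<in> {0<..<1}")
      case True
      define C where "C = 1/B * (1-u) powr (-3/2) * exp (-(\<eta>^2)/(1-u))"
      have C: "C \<ge> 0" using Bpos by (simp add: C_def)
      have "(\<integral>\<^sup>+s. \<Phi> s u \<partial>lborel) = (\<integral>\<^sup>+s. ennreal C * (ennreal (s powr ((b - 1/2) - 1) * (u-s) powr (1/2 - 1)) * indicator {0<..<u} s) \<partial>lborel)"
      proof (rule nn_integral_cong)
        fix s :: real
        show "\<Phi> s u = ennreal C * (ennreal (s powr ((b - 1/2) - 1) * (u-s) powr (1/2 - 1)) * indicator {0<..<u} s)"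
        proof (cases "s \<in> {0<..<u}")
          case True2: True
          then show ?thesis using True C
            by (simp add: \<Phi>_def C_def ennreal_mult'[symmetric] mult_ac)
        qed (use True in \<open>auto simp: \<Phi>_def\<close>)
      qed
      also have "\<dots> = ennreal C * ennreal (u powr ((b - 1/2) + 1/2 - 1) * B)"
      proof -
        have BN: "(\<integral>\<^sup>+s. ennreal (s powr ((b - 1/2) - 1) * (u-s) powr (1/2 - 1)) * indicator {0<..<u} s \<partial>lborel)
            = ennreal (u powr ((b - 1/2) + 1/2 - 1) * B)"
          unfolding B_def by (rule BetaN) (use b True in auto)
        show ?thesis unfolding BN[symmetric] by (rule nn_integral_cmult) simp
      qed
      also have "\<dots> = ennreal (u powr (b-1) * (1-u) powr (-3/2) * exp (-(\<eta>^2)/(1-u)))"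
        using True C Bpos by (simp add: ennreal_mult'[symmetric] C_def field_simps)
      finally show ?thesis using True by simp
    next
      case False
      then have "\<And>s. \<Phi> s u = 0" by (auto simp: \<Phi>_def)
      then show ?thesis using False by simp
    qed
  qed
  also have "\<dots> = (\<integral>\<^sup>+s. (\<integral>\<^sup>+u. \<Phi> s u \<partial>lborel) \<partial>lborel)"
    by (rule lborel_pair.Fubini') (simp add: \<Phi>_def case_prod_unfold)
  also have "\<dots> = (\<integral>\<^sup>+s. ennreal (sqrt pi / (\<eta> * B)) * (ennreal (s powr ((b - 1/2) - 1) * (1-s) powr (-1/2) * exp (-(\<eta>^2)/(1-s))) * indicator {0<..<1} s) \<partial>lborel)"
  proof (rule nn_integral_cong)
    fix s :: real
    show "(\<integral>\<^sup>+u. \<Phi> s u \<partial>lborel) = ennreal (sqrt pi / (\<eta> * B)) * (ennreal (s powr ((b - 1/2) - 1) * (1-s) powr (-1/2) * exp (-(\<eta>^2)/(1-s))) * indicator {0<..<1} s)"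
    proof (cases "s \<in> {0<..<1}")
      case True
      define C where "C = 1/B * s powr (b - 3/2)"
      have C: "C \<ge> 0" using Bpos by (simp add: C_def)
      have "(\<integral>\<^sup>+u. \<Phi> s u \<partial>lborel) = (\<integral>\<^sup>+u. ennreal C * (ennreal ((u-s) powr (-1/2) * (1-u) powr (-3/2) * exp (-(\<eta>^2)/(1-u))) * indicator {s<..<1} u) \<partial>lborel)"
      proof (rule nn_integral_cong)
        fix u :: real
        show "\<Phi> s u = ennreal C * (ennreal ((u-s) powr (-1/2) * (1-u) powr (-3/2) * exp (-(\<eta>^2)/(1-u))) * indicator {s<..<1} u)"
        proof (cases "u \<in> {s<..<1}")
          case True2: True
          then show ?thesis using True C
            by (simp add: \<Phi>_def C_def ennreal_mult'[symmetric] mult_ac)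
        qed (use True in \<open>auto simp: \<Phi>_def\<close>)
      qed
      also have "\<dots> = ennreal C * ennreal (sqrt pi / sqrt (\<eta>^2) * (1-s) powr (-1/2) * exp (-(\<eta>^2)/(1-s)))"
      proof -
        have JJ: "(\<integral>\<^sup>+u. ennreal ((u-s) powr (-1/2) * (1-u) powr (-3/2) * exp (-(\<eta>^2)/(1-u))) * indicator {s<..<1} u \<partial>lborel)
          = ennreal (sqrt pi / sqrt (\<eta>^2) * (1-s) powr (-1/2) * exp (-(\<eta>^2)/(1-s)))"
          by (rule JN) (use eta True in auto)
        show ?thesis unfolding JJ[symmetric] by (rule nn_integral_cmult) simp
      qed
      also have "\<dots> = ennreal (sqrt pi / (\<eta> * B)) * ennreal (s powr ((b - 1/2) - 1) * (1-s) powr (-1/2) * exp (-(\<eta>^2)/(1-s)))"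
        using True C Bpos eta by (simp add: ennreal_mult'[symmetric] C_def field_simps)
      finally show ?thesis using True by simp
    next
      case False
      then have "\<And>u. \<Phi> s u = 0" by (auto simp: \<Phi>_def)
      then show ?thesis using False by simp
    qed
  qed
  also have "\<dots> = ennreal (sqrt pi / (\<eta> * B)) * FN (b - 1/2) \<eta>"
    by (subst nn_integral_cmult) (auto simp: FN_def)
  finally have "GN b \<eta> = ennreal (sqrt pi / (\<eta> * B)) * FN (b - 1/2) \<eta>" .
  then have "ennreal (2*\<eta>) * GN b \<eta> = (ennreal (2*\<eta>) * ennreal (sqrt pi / (\<eta> * B))) * FN (b - 1/2) \<eta>"
    by (simp add: mult.assoc)
  also have "ennreal (2*\<eta>) * ennreal (sqrt pi / (\<eta> * B)) = ennreal (2 * sqrt pi / B)"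
    using eta Bpos by (simp add: ennreal_mult'[symmetric])
  finally show ?thesis by (simp add: B_def)
qed


definition hq :: "real \<Rightarrow> real \<Rightarrow> nat \<Rightarrow> real" where
  "hq a c k = pochhammer a k / (pochhammer c k * fact k)"

lemma hyp1F1_hq: "hyp1F1 a c z = (\<Sum>k. hq a c k * z ^ k)"
  by (simp add: hyp1F1_def hq_def)

lemma poch_abs_bound:
  fixes a c :: real assumes c: "c > 0"
  shows "\<bar>pochhammer a k\<bar> \<le> (\<bar>a\<bar>/c + 1) ^ k * pochhammer c k"
proof (induction k)
  case 0 then show ?case by simp
next
  case (Suc k)
  have C: "\<bar>a + real k\<bar> \<le> (\<bar>a\<bar>/c + 1) * (c + real k)"
  proof -
    have "\<bar>a + real k\<bar> \<le> \<bar>a\<bar> + real k" by simp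
    also have "\<dots> \<le> (\<bar>a\<bar>/c + 1) * (c + real k)"
      using c by (simp add: algebra_simps) (simp add: field_simps)
    finally show ?thesis .
  qed
  have "\<bar>pochhammer a (Suc k)\<bar> = \<bar>pochhammer a k\<bar> * \<bar>a + real k\<bar>"
    by (simp add: pochhammer_Suc abs_mult)
  also have "\<dots> \<le> ((\<bar>a\<bar>/c + 1) ^ k * pochhammer c k) * ((\<bar>a\<bar>/c + 1) * (c + real k))"
    using Suc C c by (intro mult_mono) auto
  also have "\<dots> = (\<bar>a\<bar>/c + 1) ^ Suc k * pochhammer c (Suc k)"
    by (simp add: pochhammer_Suc algebra_simps)
  finally show ?case .
qed

lemma hq_summable:
  fixes a c z :: real assumes c: "c > 0"
  shows "summable (\<lambda>k. hq a c k * z ^ k)"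
proof (rule summable_comparison_test'[where N=0])
  let ?C = "\<bar>a\<bar>/c + 1"
  show "summable (\<lambda>k. inverse (fact k) * (?C * \<bar>z\<bar>) ^ k)" by (rule summable_exp)
  fix k :: nat
  have pc: "pochhammer c k > 0" using c by (rule pochhammer_pos)
  have "norm (hq a c k * z ^ k) = \<bar>pochhammer a k\<bar> / (pochhammer c k * fact k) * \<bar>z\<bar> ^ k"
    using pc by (simp add: hq_def abs_mult power_abs)
  also have "\<dots> \<le> (?C ^ k * pochhammer c k) / (pochhammer c k * fact k) * \<bar>z\<bar> ^ k"
    using pc poch_abs_bound[OF c, of a k]
    by (intro mult_right_mono divide_right_mono) auto
  also have "\<dots> = inverse (fact k) * (?C ^ k * \<bar>z\<bar> ^ k)"
    using pc by (simp add: divide_inverse)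
  also have "\<dots> = inverse (fact k) * (?C * \<bar>z\<bar>) ^ k"
    by (simp only: power_mult_distrib)
  finally show "norm (hq a c k * z ^ k) \<le> inverse (fact k) * (?C * \<bar>z\<bar>) ^ k" .
qed

lemma diffs_hq:
  fixes a c :: real assumes c: "c > 0"
  shows "diffs (hq a c) k = a / c * hq (a+1) (c+1) k"
proof -
  have pc: "pochhammer (c+1) k > 0" using c by (intro pochhammer_pos) auto
  show ?thesis using pc c
    by (simp add: diffs_def hq_def pochhammer_rec field_simps del: of_nat_Suc)
qed

lemma hyp1F1_deriv:
  fixes a c z :: real assumes c: "c > 0"
  shows "(hyp1F1 a c has_real_derivative (a / c * hyp1F1 (a+1) (c+1) z)) (at z)"
proof -
  have "((\<lambda>x. \<Sum>n. hq a c n * x^n) has_field_derivative (\<Sum>n. diffs (hq a c) n * z^n)) (at z)"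
    by (rule termdiffs_strong_converges_everywhere) (rule hq_summable[OF c])
  moreover have "(\<Sum>n. diffs (hq a c) n * z^n) = a / c * hyp1F1 (a+1) (c+1) z"
  proof -
    have "(\<Sum>n. diffs (hq a c) n * z^n) = (\<Sum>n. a / c * (hq (a+1) (c+1) n * z^n))"
      by (simp add: diffs_hq[OF c] mult.assoc)
    also have "\<dots> = a / c * (\<Sum>n. hq (a+1) (c+1) n * z^n)"
      using c by (intro suminf_mult hq_summable) auto
    finally show ?thesis by (simp add: hyp1F1_hq)
  qed
  ultimately show ?thesis by (simp add: hyp1F1_hq[abs_def])
qed

lemma hyp1F1_deriv_comp [derivative_intros]:
  fixes a c :: real assumes c: "c > 0" and f: "(f has_real_derivative f') (at x)"
  shows "((\<lambda>x. hyp1F1 a c (f x)) has_real_derivative (a / c * hyp1F1 (a+1) (c+1) (f x) * f')) (at x)"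
  using DERIV_chain2[OF hyp1F1_deriv[OF c] f] .

lemma hyp1F1_zero [simp]: "hyp1F1 a c 0 = 1"
  by (simp only: hyp1F1_hq powser_zero) (simp add: hq_def)

lemma hyp1F1_a0: "hyp1F1 0 c z = 1"
proof -
  have "(\<Sum>k. hq 0 c k * z ^ k) = (\<Sum>k\<in>{0}. hq 0 c k * z ^ k)"
    by (rule suminf_finite) (auto simp: hq_def pochhammer_0_left)
  then show ?thesis by (simp add: hyp1F1_hq hq_def)
qed

lemma hyp1F1_exp:
  fixes a z :: real assumes a: "a > 0"
  shows "hyp1F1 a a z = exp z"
proof -
  have "hq a a k * z ^ k = z ^ k /\<^sub>R fact k" for k
  proof -
    have "pochhammer a k \<noteq> 0" using pochhammer_pos[OF a, of k] by simp
    then show ?thesis by (simp add: hq_def divide_inverse mult.commute)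
  qed
  then have "(\<lambda>k. hq a a k * z ^ k) = (\<lambda>k. z ^ k /\<^sub>R fact k)" by auto
  then show ?thesis using exp_converges[of z] by (simp add: hyp1F1_hq sums_iff)
qed

lemma hyp1F1_contig:
  fixes a c z :: real assumes c: "c > 1"
  shows "(c - 1) * hyp1F1 a c z + z * (a / c * hyp1F1 (a+1) (c+1) z) = (c - 1) * hyp1F1 a (c - 1) z"
proof -
  have c0: "c > 0" using c by simp
  have s1: "(\<lambda>k. (c - 1) * (hq a c k * z^k)) sums ((c - 1) * hyp1F1 a c z)"
    by (intro sums_mult summable_sums[OF hq_summable[OF c0], unfolded hyp1F1_hq[symmetric]])
  have "(\<lambda>k. diffs (hq a c) k * z^k) sums (a / c * hyp1F1 (a+1) (c+1) z)"
  proof -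
    have "(\<lambda>k. a / c * (hq (a+1) (c+1) k * z^k)) sums (a / c * hyp1F1 (a+1) (c+1) z)"
      using c0 by (intro sums_mult summable_sums[OF hq_summable, unfolded hyp1F1_hq[symmetric]]) auto
    then show ?thesis by (simp add: diffs_hq[OF c0] mult.assoc)
  qed
  then have "(\<lambda>k. z * (diffs (hq a c) k * z^k)) sums (z * (a / c * hyp1F1 (a+1) (c+1) z))"
    by (rule sums_mult)
  then have "(\<lambda>k. real (Suc k) * hq a c (Suc k) * z ^ (Suc k)) sums (z * (a / c * hyp1F1 (a+1) (c+1) z))"
    by (simp add: diffs_def algebra_simps)
  then have s2: "(\<lambda>k. real k * hq a c k * z ^ k) sums (z * (a / c * hyp1F1 (a+1) (c+1) z))"
    by (subst (asm) sums_Suc_iff) simp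
  have s: "(\<lambda>k. (c - 1) * (hq a c k * z^k) + real k * hq a c k * z ^ k) sums
             ((c - 1) * hyp1F1 a c z + z * (a / c * hyp1F1 (a+1) (c+1) z))"
    by (rule sums_add[OF s1 s2])
  have s3: "(\<lambda>k. (c - 1) * (hq a (c-1) k * z^k)) sums ((c - 1) * hyp1F1 a (c - 1) z)"
    using c by (intro sums_mult summable_sums[OF hq_summable, unfolded hyp1F1_hq[symmetric]]) auto
  have eq: "(c - 1) * (hq a c k * z^k) + real k * hq a c k * z ^ k = (c - 1) * (hq a (c-1) k * z^k)" for k
  proof -
    have p1: "pochhammer c k > 0" using c0 by (rule pochhammer_pos)
    have p2: "pochhammer (c-1) k > 0" using c by (intro pochhammer_pos) auto
    have key: "(c - 1) * pochhammer c k = pochhammer (c-1) k * (c - 1 + real k)"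
      using pochhammer_rec[of "c-1" k] pochhammer_Suc[of "c-1" k] by simp
    have r: "(c - 1 + real k) / pochhammer c k = (c - 1) / pochhammer (c-1) k"
      using p1 p2 key by (simp add: frac_eq_eq mult.commute)
    have "(c - 1) * (hq a c k * z^k) + real k * hq a c k * z ^ k
          = (c - 1 + real k) * pochhammer a k * z^k / (pochhammer c k * fact k)"
      using p1 by (simp add: hq_def field_simps)
    also have "\<dots> = ((c - 1 + real k) / pochhammer c k) * (pochhammer a k * z^k / fact k)" by simp
    also have "\<dots> = ((c-1) / pochhammer (c-1) k) * (pochhammer a k * z^k / fact k)" by (simp only: r)
    also have "\<dots> = (c - 1) * (hq a (c-1) k * z^k)"
      by (simp add: hq_def)
    finally show ?thesis .
  qed
  show ?thesis using s s3 unfolding eq by (simp add: sums_unique2)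
qed


definition R :: "real \<Rightarrow> real \<Rightarrow> real" where
  "R b z = Beta b (1/2) * hyp1F1 (1/2 - b) (1/2) (-(z^2)) - 2 * sqrt pi * z * hyp1F1 (1 - b) (3/2) (-(z^2))"

definition Rd :: "real \<Rightarrow> real \<Rightarrow> real" where
  "Rd b z = (4*b - 2) * Beta b (1/2) * z * hyp1F1 (3/2 - b) (3/2) (-(z^2)) - 2 * sqrt pi * hyp1F1 (1 - b) (1/2) (-(z^2))"

lemma R0: "R b 0 = Beta b (1/2)"
  by (simp add: R_def)

lemma R_deriv: "(R b has_real_derivative Rd b z) (at z)"
proof -
  have D: "(R b has_real_derivative
      Beta b (1/2) * ((1/2 - b) / (1/2) * hyp1F1 (1/2 - b + 1) (1/2 + 1) (-(z^2)) * (- (2 * z)))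
      - 2 * sqrt pi * (1 * hyp1F1 (1 - b) (3/2) (-(z^2)) + z * ((1 - b) / (3/2) * hyp1F1 (1 - b + 1) (3/2 + 1) (-(z^2)) * (- (2 * z))))) (at z)"
    unfolding R_def[abs_def]
    by (auto intro!: derivative_eq_intros simp: field_simps)
  have E: "1 * hyp1F1 (1 - b) (3/2) (-(z^2)) + z * ((1 - b) / (3/2) * hyp1F1 (1 - b + 1) (3/2 + 1) (-(z^2)) * (- (2 * z)))
      = hyp1F1 (1 - b) (1/2) (-(z^2))"
    using hyp1F1_contig[of "3/2" "1 - b" "-(z^2)"] by (simp add: algebra_simps power2_eq_square)
  have "Beta b (1/2) * ((1/2 - b) / (1/2) * hyp1F1 (1/2 - b + 1) (1/2 + 1) (-(z^2)) * (- (2 * z)))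
      - 2 * sqrt pi * (1 * hyp1F1 (1 - b) (3/2) (-(z^2)) + z * ((1 - b) / (3/2) * hyp1F1 (1 - b + 1) (3/2 + 1) (-(z^2)) * (- (2 * z))))
      = Rd b z"
    unfolding E Rd_def by (simp add: algebra_simps)
  with D show ?thesis by simp
qed

lemma notnonpos: "(x::real) > 0 \<Longrightarrow> x \<notin> \<int>\<^sub>\<le>\<^sub>0"
  by (auto dest: nonpos_Ints_nonpos)

lemma Beta_half_rel:
  fixes b :: real assumes b: "b > 1/2"
  shows "(2*b - 1) * Beta b (1/2) * Beta (b - 1/2) (1/2) = 2 * pi"
proof -
  have g1: "Gamma (b + 1/2) = (b - 1/2) * Gamma (b - 1/2)"
    using Gamma_plus1[OF notnonpos, of "b - 1/2"] b by (simp add: add.commute)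
  have pos: "Gamma (b - 1/2) > 0" "Gamma b > 0" using b by auto
  have "(2*b - 1) * Beta b (1/2) * Beta (b - 1/2) (1/2)
      = (2*b - 1) * (Gamma b * sqrt pi / Gamma (b + 1/2)) * (Gamma (b - 1/2) * sqrt pi / Gamma b)"
    by (simp add: Beta_def Gamma_one_half_real)
  also have "\<dots> = 2 * pi"
  proof -
    have *: "\<And>G H s. G > 0 \<Longrightarrow> H > 0 \<Longrightarrow>
       (2*b - 1) * (G * s / ((b - 1/2) * H)) * (H * s / G) = 2 * (s * s)"
      using b by (simp add: field_simps)
    have "(2*b - 1) * (Gamma b * sqrt pi / ((b - 1/2) * Gamma (b - 1/2))) * (Gamma (b - 1/2) * sqrt pi / Gamma b)
       = 2 * (sqrt pi * sqrt pi)" by (rule *) (use pos in auto)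
    then show ?thesis unfolding g1 by simp
  qed
  finally show ?thesis .
qed

lemma Rd_rel:
  fixes b z :: real assumes b: "b > 1/2"
  shows "Rd b z = - (2 * sqrt pi / Beta (b - 1/2) (1/2)) * R (b - 1/2) z"
proof -
  have Bpos: "Beta (b - 1/2) (1/2) > 0" using b by (simp add: Beta_def)
  have rel: "(4*b - 2) * Beta b (1/2) = 4 * pi / Beta (b - 1/2) (1/2)"
    using Beta_half_rel[OF b] Bpos by (simp add: field_simps)
  have e1: "1/2 - (b - 1/2) = 1 - b" "1 - (b - 1/2) = 3/2 - b" by simp_all
  show ?thesis
    unfolding Rd_def R_def e1 rel using Bpos
    by (simp add: field_simps)
qed

lemma Rd_half: "Rd (1/2) z = - 2 * sqrt pi * exp (-(z^2))"
  by (simp add: Rd_def hyp1F1_exp)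


lemma ftc_nonneg:
  fixes F f :: "real \<Rightarrow> real"
  assumes ab: "a \<le> b" and der: "\<And>x. x \<in> {a..b} \<Longrightarrow> (F has_real_derivative f x) (at x)"
    and nn: "\<And>x. x \<in> {a..b} \<Longrightarrow> f x \<ge> 0"
  shows "F b - F a \<ge> 0"
proof -
  have "(f has_integral (F b - F a)) {a..b}"
    using ab by (rule fundamental_theorem_of_calculus)
      (auto intro!: has_field_derivative_at_within der simp: has_real_derivative_iff_has_vector_derivative[symmetric])
  then show ?thesis by (rule has_integral_nonneg) (use nn in auto)
qed

lemma conclude:
  fixes b z :: real and h :: "real \<Rightarrow> real"
  assumes b: "b > 0" and z: "z \<ge> 0"
    and hnn: "\<And>\<eta>. \<eta> \<in> {0..z} \<Longrightarrow> h \<eta> \<ge> 0"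
    and hder: "\<And>\<eta>. (R b has_real_derivative - h \<eta>) (at \<eta>)"
    and heq: "\<And>\<eta>. \<eta> \<in> {0<..z} \<Longrightarrow> ennreal (2*\<eta>) * GN b \<eta> = ennreal (h \<eta>)"
  shows "FN b z = ennreal (R b z) \<and> R b z \<ge> 0"
proof -
  have der': "((\<lambda>x. - R b x) has_real_derivative h \<eta>) (at \<eta>)" for \<eta>
    using DERIV_minus[OF hder[of \<eta>]] by simp
  have I: "(\<integral>\<^sup>+\<eta>. ennreal (h \<eta>) * indicator {0..z} \<eta> \<partial>lborel) = ennreal (- R b z - - R b 0)"
    by (rule ftc_nn[OF z der' hnn])
  have dnn: "- R b z - - R b 0 \<ge> 0"
    by (rule ftc_nonneg[OF z der' hnn])
  have "(\<integral>\<^sup>+\<eta>. ennreal (2*\<eta>) * GN b \<eta> * indicator {0..z} \<eta> \<partial>lborel)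
      = (\<integral>\<^sup>+\<eta>. ennreal (h \<eta>) * indicator {0..z} \<eta> \<partial>lborel)"
  proof (rule nn_integral_cong_AE)
    show "AE \<eta> in lborel. ennreal (2*\<eta>) * GN b \<eta> * indicator {0..z} \<eta> = ennreal (h \<eta>) * indicator {0..z} \<eta>"
      using AE_lborel_singleton[of 0]
    proof (rule eventually_mono)
      fix \<eta> :: real assume "\<eta> \<noteq> 0"
      then show "ennreal (2*\<eta>) * GN b \<eta> * indicator {0..z} \<eta> = ennreal (h \<eta>) * indicator {0..z} \<eta>"
        by (cases "\<eta> \<in> {0..z}") (auto simp: heq)
    qed
  qed
  then have main: "ennreal (R b 0) = FN b z + ennreal (R b 0 - R b z)"
    using Step1[OF b z] FN0[OF b] I by (simp add: R0)
  have "FN b z = (FN b z + ennreal (R b 0 - R b z)) - ennreal (R b 0 - R b z)"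
    by simp
  also have "\<dots> = ennreal (R b 0) - ennreal (R b 0 - R b z)" by (simp add: main)
  also have "\<dots> = ennreal (R b z)" using dnn by (simp add: ennreal_minus)
  finally have 1: "FN b z = ennreal (R b z)" .
  have R0pos: "R b 0 \<ge> 0" using b by (simp add: R0 Beta_def)
  have "ennreal (R b 0 - R b z) \<le> ennreal (R b 0)" using main by simp
  then have "R b 0 - R b z \<le> R b 0" using R0pos by (simp add: ennreal_le_iff)
  then show ?thesis using 1 by simp
qed

theorem K:
  fixes n :: nat and z :: real assumes n: "n \<ge> 1" and z: "z \<ge> 0"
  shows "FN (real n / 2) z = ennreal (R (real n / 2) z) \<and> R (real n / 2) z \<ge> 0"
  using n z
proof (induction n arbitrary: z rule: nat_induct_at_least)
  case base
  show ?case
  proof (rule conclude[where h = "\<lambda>\<eta>. 2 * sqrt pi * exp (-(\<eta>^2))"])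
    show "(R (real 1 / 2) has_real_derivative - (2 * sqrt pi * exp (-(\<eta>^2)))) (at \<eta>)" for \<eta>
      using R_deriv[of "1/2" \<eta>] by (simp add: Rd_half)
    show "ennreal (2*\<eta>) * GN (real 1 / 2) \<eta> = ennreal (2 * sqrt pi * exp (-(\<eta>^2)))" if "\<eta> \<in> {0<..z}" for \<eta>
      using Step2'[of \<eta>] that by simp
  qed (use base in auto)
next
  case (Suc n)
  define b where "b = real (Suc n) / 2"
  have b: "b > 1/2" using Suc by (simp add: b_def)
  have bb: "b - 1/2 = real n / 2" unfolding b_def by (simp add: field_simps)
  define c where "c = 2 * sqrt pi / Beta (b - 1/2) (1/2)"
  have cpos: "c > 0" using b by (simp add: c_def Beta_def)
  have IH: "FN (b - 1/2) \<eta> = ennreal (R (b - 1/2) \<eta>) \<and> R (b - 1/2) \<eta> \<ge> 0" if "\<eta> \<ge> 0" for \<eta>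
    unfolding bb by (rule Suc.IH) (use that in auto)
  have "FN b z = ennreal (R b z) \<and> R b z \<ge> 0"
  proof (rule conclude[where h = "\<lambda>\<eta>. c * R (b - 1/2) \<eta>"])
    show "b > 0" using b by simp
    show "z \<ge> 0" using Suc by simp
    show "c * R (b - 1/2) \<eta> \<ge> 0" if "\<eta> \<in> {0..z}" for \<eta>
      using IH[of \<eta>] that cpos by simp
    show "(R b has_real_derivative - (c * R (b - 1/2) \<eta>)) (at \<eta>)" for \<eta>
      using R_deriv[of b \<eta>] Rd_rel[OF b, of \<eta>] by (simp add: c_def)
    show "ennreal (2*\<eta>) * GN b \<eta> = ennreal (c * R (b - 1/2) \<eta>)" if "\<eta> \<in> {0<..z}" for \<eta>
    proof -
      have "ennreal (2*\<eta>) * GN b \<eta> = ennreal c * FN (b - 1/2) \<eta>"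
        using Step2[OF b, of \<eta>] that by (simp add: c_def)
      also have "\<dots> = ennreal (c * R (b - 1/2) \<eta>)"
        using IH[of \<eta>] that cpos by (simp add: ennreal_mult)
      finally show ?thesis .
    qed
  qed
  then show ?case by (simp add: b_def)
qed


declare dfact.simps[simp del]

lemma dfact_le0: "m \<le> 0 \<Longrightarrow> dfact m = 1"
  by (subst dfact.simps) simp

lemma dfact_rec: "m > 0 \<Longrightarrow> dfact m = nat m * dfact (m - 2)"
  by (subst dfact.simps) simp

lemma dfact_gt0: "dfact m > 0"
proof (induction m rule: dfact.induct)
  case (1 m)
  then show ?case by (cases "m \<le> 0") (auto simp: dfact_le0 dfact_rec)
qed

lemma dfact_odd: "real (dfact (2 * int j + 1)) = (2 * real j + 1) * real (dfact (2 * int j - 1))"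
  by (subst dfact_rec) (auto simp: algebra_simps)

lemma dfact_even: "real (dfact (2 * int j + 2)) = (2 * real j + 2) * real (dfact (2 * int j))"
  by (subst dfact_rec) (auto simp: algebra_simps nat_add_distrib)

lemma Beta_half_half: "Beta (1/2) (1/2) = pi"
  by (simp add: Beta_def Gamma_one_half_real)

lemma Beta_one_half: "Beta 1 (1/2::real) = 2"
proof -
  have g: "Gamma (1/2 + 1) = 1/2 * Gamma (1/2::real)" by (rule Gamma_plus1) (simp add: notnonpos)
  have "Beta 1 (1/2::real) = Gamma 1 * Gamma (1/2) / Gamma (1/2 + 1)" by (simp add: Beta_def add.commute)
  also have "\<dots> = sqrt pi / (1/2 * sqrt pi)" unfolding g by (simp add: Gamma_one_half_real)
  also have "\<dots> = 2" by simp
  finally show ?thesis .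
qed

lemma B_odd: "Beta (real j + 1/2) (1/2) = pi * real (dfact (2 * int j - 1)) / real (dfact (2 * int j))"
proof (induction j)
  case 0 then show ?case by (simp add: Beta_half_half dfact_le0)
next
  case (Suc j)
  have rel: "(real j + 1) * Beta (real j + 1/2 + 1) (1/2) = (real j + 1/2) * Beta (real j + 1/2) (1/2)"
    using Beta_plus1_left[of "real j + 1/2" "1/2"] notnonpos[of "real j + 1/2"] by (simp add: add_ac)
  have e1: "2 * int j + 2 - 1 = 2 * int j + 1" by simp
  have e2: "2 * int (Suc j) = 2 * int j + 2" by simp
  have p: "real (dfact (2 * int j)) > 0" using dfact_gt0 by simp
  have "Beta (real (Suc j) + 1/2) (1/2) = Beta (real j + 1/2 + 1) (1/2)" by (simp add: add_ac)
  also have "\<dots> = (real j + 1/2) / (real j + 1) * Beta (real j + 1/2) (1/2)"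
    using rel by (simp add: field_simps)
  also have "\<dots> = pi * real (dfact (2 * int (Suc j) - 1)) / real (dfact (2 * int (Suc j)))"
    unfolding Suc.IH e1 e2 dfact_odd dfact_even using p by (simp add: field_simps)
  finally show ?case .
qed

lemma B_even: "Beta (real j + 1) (1/2) = 2 * real (dfact (2 * int j)) / real (dfact (2 * int j + 1))"
proof (induction j)
  case 0 then show ?case by (simp add: Beta_one_half dfact_le0 dfact_rec)
next
  case (Suc j)
  have rel: "(real j + 3/2) * Beta (real j + 1 + 1) (1/2) = (real j + 1) * Beta (real j + 1) (1/2)"
    using Beta_plus1_left[of "real j + 1" "1/2"] notnonpos[of "real j + 1"] by (simp add: add_ac)
  have e1: "2 * int (Suc j) = 2 * int j + 2" by simp
  have d3: "real (dfact (2 * int j + 2 + 1)) = (2 * real j + 3) * real (dfact (2 * int j + 1))"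
    by (subst dfact_rec) (auto simp: algebra_simps nat_add_distrib)
  have p: "real (dfact (2 * int j + 1)) > 0" using dfact_gt0 by simp
  have "Beta (real (Suc j) + 1) (1/2) = Beta (real j + 1 + 1) (1/2)" by (simp add: add_ac)
  also have "\<dots> = (real j + 1) / (real j + 3/2) * Beta (real j + 1) (1/2)"
    using rel by (simp add: field_simps)
  also have "\<dots> = 2 * real (dfact (2 * int (Suc j))) / real (dfact (2 * int (Suc j) + 1))"
    unfolding Suc.IH d3 e1 dfact_even using p by (simp add: field_simps)
  finally show ?case .
qed

definition DD :: "nat \<Rightarrow> real" where
  "DD m = 2 ^ (m div 2) * pi ^ ((m+1) div 2) / real (dfact (int m - 1))"

lemma DD_rel: "DD m * Beta ((real m + 1) / 2) (1/2) = DD (Suc m)"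
proof (cases "even m")
  case True
  then obtain j where m: "m = 2*j" by blast
  have a: "(real m + 1) / 2 = real j + 1/2" by (simp add: m)
  have bj: "Beta ((real m + 1) / 2) (1/2) = pi * real (dfact (2 * int j - 1)) / real (dfact (2 * int j))"
    by (subst a) (rule B_odd)
  have i1: "int m - 1 = 2 * int j - 1" and i2: "int (Suc m) - 1 = 2 * int j" by (simp_all add: m)
  have d1: "m div 2 = j" "(m+1) div 2 = j" "Suc m div 2 = j" "(Suc m + 1) div 2 = Suc j" by (simp_all add: m)
  have p: "real (dfact (2 * int j - 1)) > 0" "real (dfact (2 * int j)) > 0" using dfact_gt0 by simp_all
  show ?thesis unfolding DD_def bj i1 i2 d1 using p by (simp add: field_simps)
next
  case False
  then obtain j where m: "m = 2*j + 1" using oddE by blast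
  have a: "(real m + 1) / 2 = real j + 1" by (simp add: m)
  have bj: "Beta ((real m + 1) / 2) (1/2) = 2 * real (dfact (2 * int j)) / real (dfact (2 * int j + 1))"
    by (subst a) (rule B_even)
  have i1: "int m - 1 = 2 * int j" and i2: "int (Suc m) - 1 = 2 * int j + 1" by (simp_all add: m)
  have d1: "m div 2 = j" "(m+1) div 2 = Suc j" "Suc m div 2 = Suc j" "(Suc m + 1) div 2 = Suc j" by (simp_all add: m)
  have p: "real (dfact (2 * int j)) > 0" "real (dfact (2 * int j + 1)) > 0" using dfact_gt0 by simp_all
  show ?thesis unfolding DD_def bj i1 i2 d1 using p by (simp add: field_simps)
qed


lemma WS:
  fixes gam bet t0 x t Cm :: real and m :: nat
  assumes gam: "gam > 0" and x: "x \<ge> 0" and t: "t > t0"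
    and W0m: "\<And>s. s > t0 \<Longrightarrow> w gam bet t0 m 0 s = Cm * (s - t0) powr ((real m - 1)/2)"
  shows "w gam bet t0 (Suc m) x t = - bet / sqrt (pi*gam) * (Cm * ((t - t0) powr (real m / 2) * R ((real m + 1)/2) (x / sqrt (4*gam*(t-t0)))))"
proof -
  define \<tau> where "\<tau> = t - t0"
  have tau: "\<tau> > 0" using t by (simp add: \<tau>_def)
  define \<zeta> where "\<zeta> = x / sqrt (4*gam*\<tau>)"
  have zeta: "\<zeta> \<ge> 0" using x gam tau by (simp add: \<zeta>_def)
  define b where "b = (real m + 1)/2"
  define A where "A = {t0<..<t}"
  define g where "g = (\<lambda>s. (s - t0) powr ((real m - 1)/2) / sqrt (t-s) * exp (-(x^2)/(4*gam*(t-s))))"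
  have Kb: "FN b \<zeta> = ennreal (R b \<zeta>) \<and> R b \<zeta> \<ge> 0"
    using K[of "Suc m" \<zeta>] zeta by (simp add: b_def add.commute)
  have w1: "w gam bet t0 (Suc m) x t = (- bet) / sqrt (pi*gam) * (LINT s:A|lborel. w gam bet t0 m 0 s / sqrt (t - s) * exp (- (x^2) / (4 * gam * (t - s))))"
    using t by (simp add: A_def)
  also have "(LINT s:A|lborel. w gam bet t0 m 0 s / sqrt (t - s) * exp (- (x^2) / (4 * gam * (t - s))))
      = (LINT s:A|lborel. Cm * g s)"
    by (rule set_lebesgue_integral_cong) (auto simp: A_def g_def W0m)
  also have "\<dots> = Cm * (LINT s:A|lborel. g s)" by (rule set_integral_mult_right)
  also have "(LINT s:A|lborel. g s) = integral\<^sup>L lborel (\<lambda>s. indicator A s * g s)"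
    by (simp add: set_lebesgue_integral_def)
  also have "\<dots> = enn2real (\<integral>\<^sup>+s. ennreal (indicator A s * g s) \<partial>lborel)"
  proof (rule integral_eq_nn_integral)
    show "(\<lambda>s. indicator A s * g s) \<in> borel_measurable lborel" unfolding A_def g_def by measurable
    show "AE s in lborel. 0 \<le> indicator A s * g s"
    proof (rule AE_I2)
      fix s :: real
      show "0 \<le> indicator A s * g s"
      proof (cases "s \<in> A")
        case True
        then have "t - s > 0" by (auto simp: A_def)
        then show ?thesis unfolding g_def by (auto intro!: divide_nonneg_nonneg mult_nonneg_nonneg)
      qed simp
    qed
  qed
  also have "(\<integral>\<^sup>+s. ennreal (indicator A s * g s) \<partial>lborel) = ennreal \<tau> * (\<integral>\<^sup>+y. ennreal (indicator A (t0 + \<tau> * y) * g (t0 + \<tau> * y)) \<partial>lborel)"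
  proof -
    have "(\<integral>\<^sup>+s. ennreal (indicator A s * g s) \<partial>lborel) = ennreal \<bar>\<tau>\<bar> * (\<integral>\<^sup>+y. ennreal (indicator A (t0 + \<tau> * y) * g (t0 + \<tau> * y)) \<partial>lborel)"
      using tau by (intro nn_integral_real_affine) (auto simp: A_def g_def)
    then show ?thesis using tau by simp
  qed
  also have "(\<integral>\<^sup>+y. ennreal (indicator A (t0 + \<tau> * y) * g (t0 + \<tau> * y)) \<partial>lborel)
      = (\<integral>\<^sup>+y. ennreal (\<tau> powr ((real m - 1)/2) * \<tau> powr (-1/2)) * (ennreal (y powr (b-1) * (1-y) powr (-1/2) * exp (-(\<zeta>^2)/(1-y))) * indicator {0<..<1} y) \<partial>lborel)"
  proof (rule nn_integral_cong)
    fix y :: real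
    show "ennreal (indicator A (t0 + \<tau> * y) * g (t0 + \<tau> * y))
        = ennreal (\<tau> powr ((real m - 1)/2) * \<tau> powr (-1/2)) * (ennreal (y powr (b-1) * (1-y) powr (-1/2) * exp (-(\<zeta>^2)/(1-y))) * indicator {0<..<1} y)"
    proof (cases "y \<in> {0<..<1}")
      case True
      then have y: "0 < y" "y < 1" by auto
      have ty: "\<tau> * y < \<tau>" using mult_strict_left_mono[of y 1 \<tau>] y tau by simp
      have ty0: "\<tau> * y > 0" using y tau by simp
      have tt: "t = t0 + \<tau>" by (simp add: \<tau>_def)
      have inA: "t0 + \<tau> * y \<in> A" unfolding A_def using ty ty0 tt by auto
      have e1: "t0 + \<tau> * y - t0 = \<tau> * y" by simp
      have e2: "t - (t0 + \<tau> * y) = \<tau> * (1 - y)" by (simp add: \<tau>_def algebra_simps)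
      have p1: "(\<tau> * y) powr ((real m - 1)/2) = \<tau> powr ((real m - 1)/2) * y powr (b-1)"
        using tau y by (simp add: powr_mult b_def diff_divide_distrib)
      have p2: "1 / sqrt (\<tau> * (1 - y)) = \<tau> powr (-1/2) * (1-y) powr (-1/2)"
        using tau y by (simp add: powr_half_sqrt[symmetric] powr_mult powr_minus_divide)
      have p3: "x^2 / (4*gam*(\<tau> * (1 - y))) = \<zeta>^2 / (1-y)"
        using tau y gam by (simp add: \<zeta>_def power_divide)
      have "g (t0 + \<tau> * y) = (\<tau> powr ((real m - 1)/2) * \<tau> powr (-1/2)) * (y powr (b-1) * (1-y) powr (-1/2) * exp (-(\<zeta>^2)/(1-y)))"
      proof -
        have "g (t0 + \<tau> * y) = (\<tau> * y) powr ((real m - 1)/2) * (1 / sqrt (\<tau> * (1 - y))) * exp (-(x^2 / (4*gam*(\<tau> * (1 - y)))))"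
          unfolding g_def e1 e2 by simp
        also have "\<dots> = (\<tau> powr ((real m - 1)/2) * \<tau> powr (-1/2)) * (y powr (b-1) * (1-y) powr (-1/2) * exp (-(\<zeta>^2)/(1-y)))"
          unfolding p1 p2 p3 by (simp add: mult_ac)
        finally show ?thesis .
      qed
      then show ?thesis using inA True
        by (simp add: ennreal_mult'[symmetric])
    next
      case False
      then have "y \<le> 0 \<or> y \<ge> 1" by auto
      then have "\<tau> * y \<le> 0 \<or> \<tau> * y \<ge> \<tau>"
        using tau mult_left_mono[of 1 y \<tau>] mult_nonneg_nonpos[of \<tau> y] by auto
      moreover have tt: "t = t0 + \<tau>" by (simp add: \<tau>_def)
      ultimately have "t0 + \<tau> * y \<notin> A" unfolding A_def by auto
      then show ?thesis using False by simp
    qed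
  qed
  also have "\<dots> = ennreal (\<tau> powr ((real m - 1)/2) * \<tau> powr (-1/2)) * FN b \<zeta>"
    unfolding FN_def by (rule nn_integral_cmult) simp
  finally have main: "w gam bet t0 (Suc m) x t = - bet / sqrt (pi*gam) *
      (Cm * enn2real (ennreal \<tau> * (ennreal (\<tau> powr ((real m - 1)/2) * \<tau> powr (-1/2)) * ennreal (R b \<zeta>))))"
    using Kb by simp
  have pw: "\<tau> * (\<tau> powr ((real m - 1)/2) * \<tau> powr (-1/2)) = \<tau> powr (real m / 2)"
  proof -
    have "\<tau> * (\<tau> powr ((real m - 1)/2) * \<tau> powr (-1/2)) = \<tau> powr 1 * \<tau> powr ((real m - 1)/2) * \<tau> powr (-1/2)"
      using tau by simp
    also have "\<dots> = \<tau> powr (1 + (real m - 1)/2 + (-1/2))"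
      by (simp only: powr_add[symmetric])
    also have "1 + (real m - 1)/2 + (-1/2) = real m / 2" by (simp add: field_simps)
    finally show ?thesis .
  qed
  have "enn2real (ennreal \<tau> * (ennreal (\<tau> powr ((real m - 1)/2) * \<tau> powr (-1/2)) * ennreal (R b \<zeta>)))
      = \<tau> powr (real m / 2) * R b \<zeta>"
  proof -
    define X where "X = \<tau> powr ((real m - 1)/2) * \<tau> powr (-1/2)"
    have X: "X \<ge> 0" by (simp add: X_def)
    have R: "R b \<zeta> \<ge> 0" using Kb by simp
    have "ennreal \<tau> * (ennreal X * ennreal (R b \<zeta>)) = ennreal (\<tau> * X * R b \<zeta>)"
      using tau X R by (simp add: ennreal_mult mult.assoc)
    moreover have "\<tau> * X * R b \<zeta> = \<tau> powr (real m / 2) * R b \<zeta>"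
      unfolding pw[symmetric] X_def by (simp add: mult.assoc)
    ultimately show ?thesis unfolding X_def[symmetric] using tau X R by simp
  qed
  then show ?thesis using main by (simp add: \<tau>_def \<zeta>_def b_def)
qed

definition CC :: "real \<Rightarrow> real \<Rightarrow> nat \<Rightarrow> real" where
  "CC gam bet m = (- bet) ^ m / (4 * (pi * gam) powr ((real m + 3) / 2)) * DD m"

lemma sqrt_powr_step:
  fixes P :: real assumes P: "P > 0"
  shows "sqrt P * P powr ((real m + 3) / 2) = P powr ((real (Suc m) + 3) / 2)"
proof -
  have "sqrt P * P powr ((real m + 3) / 2) = P powr (1/2) * P powr ((real m + 3) / 2)"
    using P by (simp add: powr_half_sqrt)
  also have "\<dots> = P powr (1/2 + (real m + 3) / 2)" by (simp only: powr_add[symmetric])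
  also have "1/2 + (real m + 3) / 2 = (real (Suc m) + 3) / 2" by (simp add: field_simps)
  finally show ?thesis .
qed

lemma W0:
  fixes gam bet t0 t :: real and m :: nat
  assumes gam: "gam > 0" and t: "t > t0"
  shows "w gam bet t0 m 0 t = CC gam bet m * (t - t0) powr ((real m - 1) / 2)"
  using t
proof (induction m arbitrary: t)
  case 0
  have "sqrt (t - t0) = (t - t0) powr (1/2)" using 0 by (simp add: powr_half_sqrt)
  then show ?case using 0
    by (simp add: CC_def DD_def dfact_le0 powr_minus_divide)
next
  case (Suc m)
  have ws: "w gam bet t0 (Suc m) 0 t = - bet / sqrt (pi*gam) * (CC gam bet m * ((t - t0) powr (real m / 2) * R ((real m + 1)/2) (0 / sqrt (4*gam*(t-t0)))))"
    by (rule WS[OF gam _ Suc.prems]) (use Suc.IH in auto)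
  have P: "pi * gam > 0" using gam by simp
  have "- bet / sqrt (pi*gam) * (CC gam bet m * ((t - t0) powr (real m / 2) * R ((real m + 1)/2) 0))
      = ((- bet) * (- bet) ^ m) / (4 * (sqrt (pi*gam) * (pi * gam) powr ((real m + 3) / 2))) * (DD m * Beta ((real m + 1)/2) (1/2)) * (t - t0) powr (real m / 2)"
    using P by (simp add: CC_def R0 field_simps)
  also have "\<dots> = CC gam bet (Suc m) * (t - t0) powr ((real (Suc m) - 1) / 2)"
    unfolding DD_rel sqrt_powr_step[OF P] by (simp add: CC_def)
  finally show ?case using ws by simp
qed

lemma floor_half_nat: "\<lfloor>real n / 2\<rfloor> = int (n div 2)"
  using floor_divide_of_nat_eq[of n 2] by simp

theorem mainTheorem8:
  fixes gam bet t0 x3 t :: real and n :: nat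
  assumes "gam > 0" and "bet \<ge> 0" and "n \<ge> 1" and "x3 \<ge> 0" and "t > t0"
  defines "\<zeta> \<equiv> x3 / sqrt (4 * gam * (t - t0))"
  shows "(w gam bet t0 n x3 t =
           (- bet) ^ n * (t - t0) powr ((real n - 1) / 2) / (4 * (pi * gam) powr ((real n + 3) / 2))
           * (2 ^ nat \<lfloor>(real n - 1) / 2\<rfloor> * pi ^ nat \<lfloor>real n / 2\<rfloor> / real (dfact (int n - 2)))
           * (Beta (real n / 2) (1/2) * hyp1F1 ((1 - real n) / 2) (1/2) (- (\<zeta>^2))
              - 2 * sqrt pi * \<zeta> * hyp1F1 (1 - real n / 2) (3/2) (- (\<zeta>^2))))
         \<and> (w gam bet t0 n 0 t =
           (- bet) ^ n * (t - t0) powr ((real n - 1) / 2) / (4 * (pi * gam) powr ((real n + 3) / 2))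
           * (2 ^ nat \<lfloor>real n / 2\<rfloor> * pi ^ nat \<lfloor>(real n + 1) / 2\<rfloor> / real (dfact (int n - 1))))"
proof -
  have gam: "gam > 0" and n: "n \<ge> 1" and x: "x3 \<ge> 0" and t: "t > t0" using assms by auto
  obtain m where nm: "n = Suc m" using n by (cases n) auto
  have P: "pi * gam > 0" using gam by simp
  have f1: "nat \<lfloor>real n / 2\<rfloor> = n div 2" by (simp add: floor_half_nat)
  have f2: "nat \<lfloor>(real n + 1) / 2\<rfloor> = (n + 1) div 2"
    using floor_half_nat[of "n+1"] by (simp add: add.commute)
  have f3: "nat \<lfloor>(real n - 1) / 2\<rfloor> = m div 2"
    using floor_half_nat[of m] by (simp add: nm)
  have second: "w gam bet t0 n 0 t =
           (- bet) ^ n * (t - t0) powr ((real n - 1) / 2) / (4 * (pi * gam) powr ((real n + 3) / 2))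
           * (2 ^ nat \<lfloor>real n / 2\<rfloor> * pi ^ nat \<lfloor>(real n + 1) / 2\<rfloor> / real (dfact (int n - 1)))"
    unfolding W0[OF gam t] f1 f2 CC_def DD_def by (simp add: field_simps)
  have ws: "w gam bet t0 (Suc m) x3 t = - bet / sqrt (pi*gam) * (CC gam bet m * ((t - t0) powr (real m / 2) * R ((real m + 1)/2) (x3 / sqrt (4*gam*(t-t0)))))"
    by (rule WS[OF gam x t]) (rule W0[OF gam])
  have Req: "R ((real m + 1)/2) \<zeta> = Beta (real n / 2) (1/2) * hyp1F1 ((1 - real n) / 2) (1/2) (- (\<zeta>^2))
              - 2 * sqrt pi * \<zeta> * hyp1F1 (1 - real n / 2) (3/2) (- (\<zeta>^2))"
  proof -
    have a1: "(real m + 1)/2 = real n / 2" by (simp add: nm)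
    have a2: "1/2 - real n / 2 = (1 - real n) / 2" by (simp add: diff_divide_distrib)
    show ?thesis unfolding a1 R_def a2 ..
  qed
  have first: "w gam bet t0 n x3 t =
           (- bet) ^ n * (t - t0) powr ((real n - 1) / 2) / (4 * (pi * gam) powr ((real n + 3) / 2))
           * (2 ^ nat \<lfloor>(real n - 1) / 2\<rfloor> * pi ^ nat \<lfloor>real n / 2\<rfloor> / real (dfact (int n - 2)))
           * (Beta (real n / 2) (1/2) * hyp1F1 ((1 - real n) / 2) (1/2) (- (\<zeta>^2))
              - 2 * sqrt pi * \<zeta> * hyp1F1 (1 - real n / 2) (3/2) (- (\<zeta>^2)))"
  proof -
    have i1: "int n - 2 = int m - 1" by (simp add: nm)
    have n2: "n div 2 = (m + 1) div 2" by (simp add: nm)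
    have e: "(real n - 1) / 2 = real m / 2" by (simp add: nm)
    have e2: "(real n + 3) / 2 = (real (Suc m) + 3) / 2" by (simp add: nm)
    have "w gam bet t0 n x3 t = ((- bet) * (- bet) ^ m) / (4 * (sqrt (pi*gam) * (pi * gam) powr ((real m + 3) / 2))) * DD m * (t - t0) powr (real m / 2) * R ((real m + 1)/2) \<zeta>"
      unfolding nm ws \<zeta>_def using P by (simp add: CC_def field_simps)
    also have "\<dots> = (- bet) ^ n * (t - t0) powr ((real n - 1) / 2) / (4 * (pi * gam) powr ((real n + 3) / 2)) * DD m * R ((real m + 1)/2) \<zeta>"
      unfolding sqrt_powr_step[OF P] e e2 by (simp add: nm field_simps)
    also have "\<dots> = (- bet) ^ n * (t - t0) powr ((real n - 1) / 2) / (4 * (pi * gam) powr ((real n + 3) / 2))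
           * (2 ^ nat \<lfloor>(real n - 1) / 2\<rfloor> * pi ^ nat \<lfloor>real n / 2\<rfloor> / real (dfact (int n - 2)))
           * (Beta (real n / 2) (1/2) * hyp1F1 ((1 - real n) / 2) (1/2) (- (\<zeta>^2))
              - 2 * sqrt pi * \<zeta> * hyp1F1 (1 - real n / 2) (3/2) (- (\<zeta>^2)))"
      unfolding Req[symmetric] f3 f1 i1 n2 DD_def by simp
    finally show ?thesis .
  qed
  show ?thesis using first second by blast
qed


end
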